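(* (i) For every integer $n\ge 2$ there exists a graph $G$ with $B_{dom}(G)=n$. (ii) There exist graphs $G$ and $H$ with the same dominated chromatic number for which $|B_{dom}(G)-B_{dom}(H)|$ is arbitrarily large; that is, for every positive integer $N$ there exist graphs $G,H$ with $\chi_{dom}(G)=\chi_{dom}(H)$ and $|B_{dom}(G)-B_{dom}(H)|\ge N$.
   Context: A dominated coloring of a graph is a proper coloring in which every color class is dominated by at least one vertex, i.e. for each color class $C$ there is a vertex adjacent to every vertex of $C$; $\chi_{dom}(G)$ is the minimum number of colors in a dominated coloring. The dom-bondage number $B_{dom}(G)$ is the minimum number of edges of $G$ whose removal changes the dominated chromatic number of $G$. *)

theory Defs
  imports Main "HOL-Library.Extended_Nat"
begin

definition simple_graph :: "nat set \<Rightarrow> nat set set \<Rightarrow> bool" where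
  "simple_graph V E \<longleftrightarrow> finite V \<and>
     (\<forall>e\<in>E. \<exists>u v. e = {u, v} \<and> u \<noteq> v \<and> u \<in> V \<and> v \<in> V)"

definition no_isolated :: "nat set \<Rightarrow> nat set set \<Rightarrow> bool" where
  "no_isolated V E \<longleftrightarrow> (\<forall>v\<in>V. \<exists>u. {u, v} \<in> E)"

definition dominated_coloring :: "nat set \<Rightarrow> nat set set \<Rightarrow> nat \<Rightarrow> (nat \<Rightarrow> nat) \<Rightarrow> bool" where
  "dominated_coloring V E k c \<longleftrightarrow>
     (\<forall>v\<in>V. c v < k) \<and>
     (\<forall>u\<in>V. \<forall>v\<in>V. {u, v} \<in> E \<longrightarrow> c u \<noteq> c v) \<and>
     (\<forall>i<k. \<exists>w\<in>V. \<forall>v\<in>V. c v = i \<longrightarrow> {w, v} \<in> E)"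

text \<open>Dominated chromatic number; infinity if no dominated coloring exists
(e.g. when there is an isolated vertex).\<close>

definition chi_dom :: "nat set \<Rightarrow> nat set set \<Rightarrow> enat" where
  "chi_dom V E = (INF k \<in> {k. \<exists>c. dominated_coloring V E k c}. enat k)"

definition B_dom :: "nat set \<Rightarrow> nat set set \<Rightarrow> enat" where
  "B_dom V E = (INF F \<in> {F. F \<subseteq> E \<and> chi_dom V (E - F) \<noteq> chi_dom V E}. enat (card F))"

end

theory Submission
  imports Defs
begin

definition KV :: "nat \<Rightarrow> nat set" where "KV n = {0..<2*n}"
definition KE :: "nat \<Rightarrow> nat set set" where
  "KE n = {{a,b} | a b. a < n \<and> n \<le> b \<and> b < 2*n}"

lemma chi_dom_eqI:
  assumes "dominated_coloring V E k c" "\<And>k' c'. k' < k \<Longrightarrow> \<not> dominated_coloring V E k' c'"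
  shows "chi_dom V E = enat k"
  unfolding chi_dom_def
proof (rule antisym)
  show "(INF k \<in> {k. \<exists>c. dominated_coloring V E k c}. enat k) \<le> enat k"
    by (rule INF_lower2[of k]) (use assms(1) in auto)
  show "enat k \<le> (INF k \<in> {k. \<exists>c. dominated_coloring V E k c}. enat k)"
  proof (rule INF_greatest)
    fix k' assume "k' \<in> {k. \<exists>c. dominated_coloring V E k c}"
    hence "\<not> k' < k" using assms(2) by blast
    thus "enat k \<le> enat k'" by simp
  qed
qed

lemma chi_dom_top:
  assumes "\<And>k c. \<not> dominated_coloring V E k c"
  shows "chi_dom V E = \<infinity>"
proof -
  have e: "{k. \<exists>c. dominated_coloring V E k c} = {}" using assms by blast
  show ?thesis unfolding chi_dom_def e by (simp add: top_enat_def)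
qed

lemma KE_finite: "finite (KE n)"
proof -
  have "KE n = (\<lambda>(a,b). {a,b}) ` ({0..<n} \<times> {n..<2*n})"
    unfolding KE_def by force
  thus ?thesis by simp
qed

lemma KE_mem: "e \<in> KE n \<Longrightarrow> \<exists>a b. e = {a,b} \<and> a < n \<and> n \<le> b \<and> b < 2*n"
  unfolding KE_def by auto

lemma KE_edge: "a < n \<Longrightarrow> n \<le> b \<Longrightarrow> b < 2*n \<Longrightarrow> {a,b} \<in> KE n"
  unfolding KE_def by auto

lemma K_simple: "simple_graph (KV n) (KE n)"
  unfolding simple_graph_def
proof (intro conjI ballI)
  show "finite (KV n)" by (simp add: KV_def)
  fix e assume "e \<in> KE n"
  then obtain a b where "e = {a,b}" "a < n" "n \<le> b" "b < 2*n" using KE_mem by blast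
  thus "\<exists>u v. e = {u, v} \<and> u \<noteq> v \<and> u \<in> KV n \<and> v \<in> KV n"
    by (intro exI[of _ a] exI[of _ b]) (auto simp: KV_def)
qed

lemma K_noiso: "n \<ge> 1 \<Longrightarrow> no_isolated (KV n) (KE n)"
  unfolding no_isolated_def KV_def
proof
  fix v assume n: "n \<ge> 1" and v: "v \<in> {0..<2*n}"
  show "\<exists>u. {u, v} \<in> KE n"
  proof (cases "v < n")
    case True
    have "{v, n} \<in> KE n" using True n by (intro KE_edge) auto
    thus ?thesis by (metis insert_commute)
  next
    case False
    have "{0, v} \<in> KE n" using False v n by (intro KE_edge) auto
    thus ?thesis by blast
  qed
qed

lemma untouched_B:
  assumes "F \<subseteq> KE n" "card F < n"
  shows "\<exists>b. n \<le> b \<and> b < 2*n \<and> (\<forall>a. {a,b} \<notin> F \<or> \<not> a < n)"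
proof -
  have fin: "finite F" using assms(1) KE_finite finite_subset by blast
  have "card (Max ` F) \<le> card F" using card_image_le fin by blast
  hence "card (Max ` F) < card {n..<2*n}" using assms by simp
  hence "\<not> {n..<2*n} \<subseteq> Max ` F"
    using card_mono[OF finite_imageI[OF fin]] by (metis not_le)
  then obtain b where b: "b \<in> {n..<2*n}" "b \<notin> Max ` F" by blast
  have "\<forall>a. {a,b} \<notin> F \<or> \<not> a < n"
  proof (intro allI)
    fix a show "{a,b} \<notin> F \<or> \<not> a < n"
    proof (rule ccontr)
      assume "\<not> ({a,b} \<notin> F \<or> \<not> a < n)"
      hence "{a,b} \<in> F" "a < n" by auto
      moreover have "Max {a,b} = b" using \<open>a < n\<close> b by auto
      ultimately show False using b by (metis image_eqI)
    qed
  qed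
  thus ?thesis using b by auto
qed

lemma untouched_A:
  assumes "F \<subseteq> KE n" "card F < n"
  shows "\<exists>a. a < n \<and> (\<forall>b. {a,b} \<notin> F \<or> \<not> (n \<le> b \<and> b < 2*n))"
proof -
  have fin: "finite F" using assms(1) KE_finite finite_subset by blast
  have "card (Min ` F) \<le> card F" using card_image_le fin by blast
  hence "card (Min ` F) < card {0..<n}" using assms by simp
  hence "\<not> {0..<n} \<subseteq> Min ` F"
    using card_mono[OF finite_imageI[OF fin]] by (metis not_le)
  then obtain a where a: "a \<in> {0..<n}" "a \<notin> Min ` F" by blast
  have "\<forall>b. {a,b} \<notin> F \<or> \<not> (n \<le> b \<and> b < 2*n)"
  proof (intro allI)
    fix b show "{a,b} \<notin> F \<or> \<not> (n \<le> b \<and> b < 2*n)"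
    proof (rule ccontr)
      assume "\<not> ({a,b} \<notin> F \<or> \<not> (n \<le> b \<and> b < 2*n))"
      hence "{a,b} \<in> F" "n \<le> b" by auto
      moreover have "Min {a,b} = a" using \<open>n \<le> b\<close> a by auto
      ultimately show False using a by (metis image_eqI)
    qed
  qed
  thus ?thesis using a by auto
qed

lemma K_chi_sub:
  assumes "n \<ge> 1" "F \<subseteq> KE n" "card F < n"
  shows "chi_dom (KV n) (KE n - F) = enat 2"
proof -
  obtain b where b: "n \<le> b" "b < 2*n" "\<forall>a. {a,b} \<notin> F \<or> \<not> a < n"
    using untouched_B[OF assms(2,3)] by blast
  obtain a where a: "a < n" "\<forall>b. {a,b} \<notin> F \<or> \<not> (n \<le> b \<and> b < 2*n)"
    using untouched_A[OF assms(2,3)] by blast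
  define c where "c = (\<lambda>v::nat. if v < n then 0 else (1::nat))"
  show ?thesis
  proof (rule chi_dom_eqI[where c = c])
    show "dominated_coloring (KV n) (KE n - F) 2 c"
      unfolding dominated_coloring_def
    proof (intro conjI ballI allI impI)
      fix v assume "v \<in> KV n" thus "c v < 2" by (simp add: c_def)
    next
      fix u v assume "{u,v} \<in> KE n - F"
      then obtain x y where "{u,v} = {x,y}" "x < n" "n \<le> y" by (auto dest!: KE_mem)
      thus "c u \<noteq> c v" unfolding c_def by (auto simp: doubleton_eq_iff)
    next
      fix i :: nat assume "i < 2"
      show "\<exists>w\<in>KV n. \<forall>v\<in>KV n. c v = i \<longrightarrow> {w, v} \<in> KE n - F"
      proof (cases "i = 0")
        case True
        show ?thesis
        proof (rule bexI[of _ b], intro ballI impI)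
          fix v assume "v \<in> KV n" "c v = i"
          hence "v < n" using True by (auto simp: c_def split: if_splits)
          hence "{v,b} \<in> KE n - F" using b KE_edge by auto
          thus "{b, v} \<in> KE n - F" by (metis insert_commute)
        qed (use b in \<open>auto simp: KV_def\<close>)
      next
        case False
        show ?thesis
        proof (rule bexI[of _ a], intro ballI impI)
          fix v assume "v \<in> KV n" "c v = i"
          hence "n \<le> v" "v < 2*n" using False by (auto simp: c_def KV_def split: if_splits)
          thus "{a, v} \<in> KE n - F" using a KE_edge by auto
        qed (use a in \<open>auto simp: KV_def\<close>)
      qed
    qed
  next
    fix k' c' assume k': "k' < (2::nat)"
    show "\<not> dominated_coloring (KV n) (KE n - F) k' c'"
    proof
      assume d: "dominated_coloring (KV n) (KE n - F) k' c'"
      have av: "a \<in> KV n" and bv: "b \<in> KV n" using a b by (auto simp: KV_def)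
      have ab: "{a,b} \<in> KE n - F" using a b KE_edge by auto
      have "c' a < k'" "c' b < k'" using d av bv by (auto simp: dominated_coloring_def)
      hence "c' a = c' b" using k' by linarith
      moreover have "c' a \<noteq> c' b" using d av bv ab by (auto simp: dominated_coloring_def)
      ultimately show False by simp
    qed
  qed
qed

lemma K_chi: "n \<ge> 1 \<Longrightarrow> chi_dom (KV n) (KE n) = enat 2"
  using K_chi_sub[of n "{}"] by simp

lemma K_B: assumes "n \<ge> 1" shows "B_dom (KV n) (KE n) = enat n"
proof -
  define F0 where "F0 = (\<lambda>b. {0,b}) ` {n..<2*n}"
  have F0sub: "F0 \<subseteq> KE n" unfolding F0_def using assms by (auto intro: KE_edge)
  have "inj_on (\<lambda>b. {0::nat,b}) {n..<2*n}"
    unfolding inj_on_def using assms by (auto simp: doubleton_eq_iff)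
  hence cF0: "card F0 = n" unfolding F0_def by (simp add: card_image)
  have "\<not> dominated_coloring (KV n) (KE n - F0) k c" for k c
  proof
    assume d: "dominated_coloring (KV n) (KE n - F0) k c"
    have z: "0 \<in> KV n" using assms by (auto simp: KV_def)
    hence "c 0 < k" using d by (auto simp: dominated_coloring_def)
    then obtain w where "w \<in> KV n" "{w, 0} \<in> KE n - F0"
      using d z by (auto simp: dominated_coloring_def)
    then obtain x y where "{w,0} = {x,y}" "x < n" "n \<le> y" "y < 2*n" "{w,0} \<notin> F0"
      by (auto dest!: KE_mem)
    thus False unfolding F0_def using assms by (auto simp: doubleton_eq_iff)
  qed
  hence top: "chi_dom (KV n) (KE n - F0) = \<infinity>" by (rule chi_dom_top)
  show ?thesis unfolding B_dom_def
  proof (rule antisym)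
    show "(INF F \<in> {F. F \<subseteq> KE n \<and> chi_dom (KV n) (KE n - F) \<noteq> chi_dom (KV n) (KE n)}.
            enat (card F)) \<le> enat n"
      by (rule INF_lower2[of F0]) (use F0sub top K_chi[OF assms] cF0 in auto)
    show "enat n \<le> (INF F \<in> {F. F \<subseteq> KE n \<and> chi_dom (KV n) (KE n - F) \<noteq> chi_dom (KV n) (KE n)}.
            enat (card F))"
    proof (rule INF_greatest)
      fix F assume "F \<in> {F. F \<subseteq> KE n \<and> chi_dom (KV n) (KE n - F) \<noteq> chi_dom (KV n) (KE n)}"
      thus "enat n \<le> enat (card F)"
        using K_chi_sub[OF assms] K_chi[OF assms] by (auto simp: not_less[symmetric])
    qed
  qed
qed

theorem mainTheorem15:
  shows "(\<forall>n::nat. n \<ge> 2 \<longrightarrow>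
            (\<exists>V E. simple_graph V E \<and> no_isolated V E \<and> B_dom V E = enat n))
       \<and> (\<forall>N::nat. N > 0 \<longrightarrow>
            (\<exists>V E V' E' a b. simple_graph V E \<and> no_isolated V E \<and>
                simple_graph V' E' \<and> no_isolated V' E' \<and>
                chi_dom V E = chi_dom V' E' \<and>
                B_dom V E = enat a \<and> B_dom V' E' = enat b \<and>
                int N \<le> \<bar>int a - int b\<bar>))"
proof (intro conjI allI impI)
  fix n :: nat assume "n \<ge> 2"
  thus "\<exists>V E. simple_graph V E \<and> no_isolated V E \<and> B_dom V E = enat n"
    using K_simple K_noiso K_B by (metis le_trans one_le_numeral)
next
  fix N :: nat assume "N > 0"
  have "N + 1 \<ge> 1" by simp
  show "\<exists>V E V' E' a b. simple_graph V E \<and> no_isolated V E \<and>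
                simple_graph V' E' \<and> no_isolated V' E' \<and>
                chi_dom V E = chi_dom V' E' \<and>
                B_dom V E = enat a \<and> B_dom V' E' = enat b \<and>
                int N \<le> \<bar>int a - int b\<bar>"
    apply (rule exI[of _ "KV (N+1)"], rule exI[of _ "KE (N+1)"],
           rule exI[of _ "KV 1"], rule exI[of _ "KE 1"],
           rule exI[of _ "N+1"], rule exI[of _ 1])
    using K_simple K_noiso K_B K_chi by simp
qed

end
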